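(* Let $\mathcal{C}\subset\mathbb{R}^n$ be a nonempty compact convex set with Euclidean diameter $D$, let $f$ be continuously differentiable with $\nabla f$ $L$-Lipschitz on $\mathcal{C}$, $f^\star=\min_{\mathcal{C}}f$, and $F_0=f(x^0)-f^\star$. Let $T\in\mathbb{N}$ and let $\{x^t\}_{t=0}^{T}$ be generated by the Boosted Frank–Wolfe algorithm described in the context with $m^t=\nabla f(x^t)$ and constant step decay $\eta_t=\frac1{\sqrt{T+1}}$. Then $$\min_{0\le t\le T}\langle\nabla f(x^t),x^t-s^t\rangle\le\frac{F_0+\frac{LD^2}{2}}{\sqrt{T+1}},$$ where $s^t=\mathrm{lmo}(\nabla f(x^t))$.
   Context: Euclidean norms; $D=\max_{x,y\in\mathcal{C}}\|x-y\|$. $\mathrm{lmo}(v)$ denotes a (fixed selection of a) point of $\arg\min_{s\in\mathcal{C}}\langle s,v\rangle$. $\mathrm{align}(d,\hat d)=\frac{\langle d,\hat d\rangle}{\|d\|\|\hat d\|}$ if $\hat d\ne0$, $-1$ if $\hat d=0$. Algorithm: inputs $K\ge1$, $\delta\in(0,1]$, step decays $\eta_t>0$, a vector $m^{\rm init}$; $x^0=\mathrm{lmo}(m^{\rm init})$. At iteration $t$ a vector $m^t$ is formed. Boosting: $\psi^0=0$, $\Lambda_t=0$, $k=0$; while $k\le K-1$: $r^k=-m^t-\psi^k$, $v^k=\mathrm{lmo}(-r^k)$; if $k=0$, $s^t=v^0$; if $\psi^k\ne0$, $u^k$ is whichever of $v^k-x^t$, $-\psi^k/\|\psi^k\|$ has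 the larger inner product with $r^k$, else $u^k=v^k-x^t$; if $u^k=0$ stop; $\lambda_k=\langle r^k,u^k\rangle/\|u^k\|^2$, $\phi^k=\psi^k+\lambda_ku^k$; if $\mathrm{align}(-m^t,\phi^k)-\mathrm{align}(-m^t,\psi^k)\ge\delta$ then $\psi^{k+1}=\phi^k$, $\Lambda_t\leftarrow\Lambda_t+\lambda_k$ if $u^k=v^k-x^t$ and $\Lambda_t\leftarrow\Lambda_t(1-\lambda_k/\|\psi^k\|)$ otherwise, $k\leftarrow k+1$; else stop. With $\psi$ the last accepted candidate, $\tilde d^t=\psi/\Lambda_t$ if $\Lambda_t\ne0$, else $0$. $\gamma_t=\min\{\eta_t\|s^t-x^t\|/\|\tilde d^t\|,1\}$ if $\tilde d^t\ne0$, else $1$. If $\gamma_t<1$: $x^{t+1}=x^t+\gamma_t\tilde d^t$; otherwise $x^{t+1}=x^t+\eta_t(s^t-x^t)$. *)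

theory Defs
  imports "HOL-Analysis.Analysis"
begin

definition align :: "'a::real_inner \<Rightarrow> 'a \<Rightarrow> real" where
  "align d dh = (if dh = 0 then -1 else inner d dh / (norm d * norm dh))"

definition boost_step ::
  "('a::real_inner \<Rightarrow> 'a) \<Rightarrow> real \<Rightarrow> 'a \<Rightarrow> 'a \<Rightarrow> 'a \<times> real \<Rightarrow> ('a \<times> real) option" where
  "boost_step lmo \<delta> x m st =
    (let \<psi> = fst st; \<Lambda> = snd st;
         r = - m - \<psi>;
         v = lmo (- r);
         a = - (scaleR (1 / norm \<psi>) \<psi>);
         u = (if \<psi> \<noteq> 0 \<and> inner r a > inner r (v - x) then a else v - x)
     in if u = 0 then None
        else (let lam = inner r u / (norm u)\<^sup>2;
                  \<phi> = \<psi> + scaleR lam u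
              in if align (- m) \<phi> - align (- m) \<psi> \<ge> \<delta>
                 then Some (\<phi>, if u = v - x then \<Lambda> + lam else \<Lambda> * (1 - lam / norm \<psi>))
                 else None))"

fun boost_loop ::
  "('a::real_inner \<Rightarrow> 'a) \<Rightarrow> real \<Rightarrow> 'a \<Rightarrow> 'a \<Rightarrow> nat \<Rightarrow> 'a \<times> real \<Rightarrow> 'a \<times> real" where
  "boost_loop lmo \<delta> x m 0 st = st"
| "boost_loop lmo \<delta> x m (Suc n) st =
     (case boost_step lmo \<delta> x m st of None \<Rightarrow> st
      | Some st' \<Rightarrow> boost_loop lmo \<delta> x m n st')"

definition bfw_next ::
  "('a::real_inner \<Rightarrow> 'a) \<Rightarrow> nat \<Rightarrow> real \<Rightarrow> real \<Rightarrow> 'a \<Rightarrow> 'a \<Rightarrow> 'a" where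
  "bfw_next lmo K \<delta> \<eta> m x =
    (let st = boost_loop lmo \<delta> x m K (0, 0);
         \<psi> = fst st; \<Lambda> = snd st;
         s = lmo m;
         d = (if \<Lambda> \<noteq> 0 then scaleR (1 / \<Lambda>) \<psi> else 0);
         \<gamma> = (if d \<noteq> 0 then min (\<eta> * norm (s - x) / norm d) 1 else 1)
     in if \<gamma> < 1 then x + scaleR \<gamma> d else x + scaleR \<eta> (s - x))"

end

theory Submission
  imports Defs
begin

definition binv :: "'a::real_inner set \<Rightarrow> 'a \<Rightarrow> 'a \<Rightarrow> 'a \<Rightarrow> 'a \<times> real \<Rightarrow> bool" where
  "binv C x m s st = ((fst st = 0 \<and> snd st = 0) \<or> (fst st \<noteq> 0 \<and> snd st > 0 \<and>
     x + (1 / snd st) *\<^sub>R fst st \<in> C \<and> inner (-m) (fst st) \<ge> 0 \<and>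
     inner (-m) (s - x) / norm (s - x) \<le> inner (-m) (fst st) / norm (fst st)))"

lemma align_nz: "dh \<noteq> 0 \<Longrightarrow> align d dh = inner d dh / (norm d * norm dh)"
  by (simp add: align_def)

lemma boost_step_inv:
  fixes lmo :: "'a::real_inner \<Rightarrow> 'a"
  assumes cvx: "convex C" and lin: "\<And>v. lmo v \<in> C"
    and lmin: "\<And>v s. s \<in> C \<Longrightarrow> inner (lmo v) v \<le> inner s v"
    and xC: "x \<in> C" and dp: "0 < \<delta>"
    and I: "binv C x m (lmo m) st" and S: "boost_step lmo \<delta> x m st = Some st'"
  shows "binv C x m (lmo m) st'"
proof -
  obtain \<psi> \<Lambda> where st: "st = (\<psi>, \<Lambda>)" by fastforce
  define r where "r = - m - \<psi>"
  define v where "v = lmo (- r)"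
  define a where "a = - (scaleR (1 / norm \<psi>) \<psi>)"
  define u where "u = (if \<psi> \<noteq> 0 \<and> inner r a > inner r (v - x) then a else v - x)"
  define lam where "lam = inner r u / (norm u)\<^sup>2"
  define \<phi> where "\<phi> = \<psi> + scaleR lam u"
  have eq: "boost_step lmo \<delta> x m st = (if u = 0 then None else
     if align (- m) \<phi> - align (- m) \<psi> \<ge> \<delta>
                 then Some (\<phi>, if u = v - x then \<Lambda> + lam else \<Lambda> * (1 - lam / norm \<psi>))
                 else None)"
    unfolding boost_step_def st Let_def fst_conv snd_conv r_def v_def a_def u_def lam_def \<phi>_def by (rule refl)
  from S eq have u0: "u \<noteq> 0" and acc: "align (- m) \<phi> - align (- m) \<psi> \<ge> \<delta>"
    and st': "st' = (\<phi>, if u = v - x then \<Lambda> + lam else \<Lambda> * (1 - lam / norm \<psi>))"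
    by (auto split: if_splits)
  have vC: "v \<in> C" using lin v_def by simp
  have rv: "inner r (v - x) \<ge> 0"
    using lmin[OF xC, of "-r"] unfolding v_def by (simp add: inner_diff_right inner_commute)
  have nu: "norm u > 0" using u0 by simp
  show ?thesis
  proof (cases "\<psi> = 0")
    case True
    with I st have L0: "\<Lambda> = 0" by (simp add: binv_def)
    have uv: "u = v - x" using True u_def by simp
    have vs: "v = lmo m" using True v_def r_def by simp
    have lam0: "lam \<ge> 0" using rv uv lam_def by simp
    have al: "align (-m) \<psi> = -1" using True by (simp add: align_def)
    have "\<phi> \<noteq> 0"
    proof
      assume "\<phi> = 0" then have "align (-m) \<phi> = -1" by (simp add: align_def)
      with acc al dp show False by simp
    qed
    then have lp: "lam > 0" using lam0 True \<phi>_def by (cases "lam = 0") auto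
    have "x + (1 / lam) *\<^sub>R \<phi> = v" using lp True \<phi>_def uv by simp
    moreover have "inner (-m) \<phi> = lam * inner r u" using True \<phi>_def r_def by simp
    moreover have "inner (-m) \<phi> / norm \<phi> = inner (-m) u / norm u"
      using True \<phi>_def lp by simp
    ultimately show ?thesis using st' L0 uv vs vC lp `\<phi> \<noteq> 0` rv True r_def
      by (simp add: binv_def mult_nonneg_nonpos)
  next
    case False
    with I st have Lp: "\<Lambda> > 0" and dC: "x + (1/\<Lambda>) *\<^sub>R \<psi> \<in> C" and ip: "inner (-m) \<psi> \<ge> 0"
      and rat: "inner (-m) (lmo m - x) / norm (lmo m - x) \<le> inner (-m) \<psi> / norm \<psi>"
      by (auto simp: binv_def)
    have alp: "align (-m) \<psi> = inner (-m) \<psi> / (norm m * norm \<psi>)" using False by (simp add: align_def)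
    have alp0: "align (-m) \<psi> \<ge> 0" using alp ip by (simp add: divide_nonpos_nonneg)
    have m0: "m \<noteq> 0"
    proof
      assume "m = 0"
      then have "align (-m) \<phi> \<le> 0" "align (-m) \<psi> = 0" using alp by (auto simp: align_def)
      with acc dp show False by simp
    qed
    have p0: "\<phi> \<noteq> 0"
    proof
      assume "\<phi> = 0" then have "align (-m) \<phi> = -1" by (simp add: align_def)
      with acc alp0 dp show False by simp
    qed
    have alph: "align (-m) \<phi> = inner (-m) \<phi> / (norm m * norm \<phi>)" using p0 by (simp add: align_def)
    have "align (-m) \<phi> > align (-m) \<psi>" using acc dp by simp
    then have "inner (-m) \<phi> / norm \<phi> / norm m > inner (-m) \<psi> / norm \<psi> / norm m"
      using alp alph by (simp add: mult.commute)
    moreover have "\<And>a b n::real. a / n < b / n \<Longrightarrow> n > 0 \<Longrightarrow> a < b"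
      by (simp add: divide_less_cancel)
    ultimately have gt: "inner (-m) \<phi> / norm \<phi> > inner (-m) \<psi> / norm \<psi>"
      using m0 by (metis zero_less_norm_iff)
    have rps: "inner (-m) \<psi> / norm \<psi> \<ge> 0" using ip by (simp add: divide_nonpos_nonneg)
    have ipp: "inner (-m) \<phi> \<ge> 0"
    proof -
      have "inner (-m) \<phi> / norm \<phi> > 0" using gt rps by linarith
      then show ?thesis using p0 by (simp add: divide_less_0_iff)
    qed
    show ?thesis
    proof (cases "u = v - x")
      case True
      have lam0: "lam \<ge> 0" using rv True lam_def by simp
      have L': "\<Lambda> + lam > 0" using Lp lam0 by simp
      have "x + (1 / (\<Lambda> + lam)) *\<^sub>R \<phi> = (\<Lambda> / (\<Lambda> + lam)) *\<^sub>R (x + (1/\<Lambda>) *\<^sub>R \<psi>) + (lam / (\<Lambda> + lam)) *\<^sub>R v"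
        using Lp L' unfolding \<phi>_def True
        by (simp add: algebra_simps divide_simps) (simp add: scaleR_left_distrib[symmetric] add_divide_distrib[symmetric])
      moreover have "(\<Lambda> / (\<Lambda> + lam)) *\<^sub>R (x + (1/\<Lambda>) *\<^sub>R \<psi>) + (lam / (\<Lambda> + lam)) *\<^sub>R v \<in> C"
        using convexD[OF cvx dC vC, of "\<Lambda> / (\<Lambda> + lam)" "lam / (\<Lambda> + lam)"] Lp L' lam0
        by (simp add: add_divide_distrib[symmetric])
      ultimately show ?thesis using st' True L' p0 ipp gt rat by (simp add: binv_def)
    next
      case False
      then have ua: "u = a" using u_def by (auto split: if_splits)
      define c where "c = 1 - lam / norm \<psi>"
      have pc: "\<phi> = c *\<^sub>R \<psi>" unfolding \<phi>_def ua a_def c_def by (simp add: algebra_simps)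
      have "c \<noteq> 0" using p0 pc by auto
      have cp: "c > 0"
      proof (rule ccontr)
        assume "\<not> c > 0"
        with `c \<noteq> 0` have "c < 0" by simp
        then have "inner (-m) \<phi> / norm \<phi> = - (inner (-m) \<psi> / norm \<psi>)"
          using pc by (simp add: abs_if)
        with gt rps show False by linarith
      qed
      have "x + (1 / (\<Lambda> * c)) *\<^sub>R \<phi> = x + (1/\<Lambda>) *\<^sub>R \<psi>" using pc cp by simp
      moreover have "inner (-m) \<phi> / norm \<phi> = inner (-m) \<psi> / norm \<psi>" using pc cp by simp
      ultimately show ?thesis using st' False Lp cp p0 ipp rat dC c_def by (simp add: binv_def)
    qed
  qed
qed


lemma boost_loop_inv:
  fixes lmo :: "'a::real_inner \<Rightarrow> 'a"
  assumes cvx: "convex C" and lin: "\<And>v. lmo v \<in> C"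
    and lmin: "\<And>v s. s \<in> C \<Longrightarrow> inner (lmo v) v \<le> inner s v"
    and xC: "x \<in> C" and dp: "0 < \<delta>"
  shows "binv C x m (lmo m) st \<Longrightarrow> binv C x m (lmo m) (boost_loop lmo \<delta> x m n st)"
proof (induction n arbitrary: st)
  case 0 then show ?case by simp
next
  case (Suc n)
  show ?case
  proof (cases "boost_step lmo \<delta> x m st")
    case None then show ?thesis using Suc by simp
  next
    case (Some st')
    then have "binv C x m (lmo m) st'"
      using boost_step_inv[OF cvx lin lmin xC dp Suc.prems] by blast
    then show ?thesis using Some Suc.IH by simp
  qed
qed

lemma bfw_step:
  fixes lmo :: "'a::real_inner \<Rightarrow> 'a"
  assumes cvx: "convex C" and lin: "\<And>v. lmo v \<in> C"
    and lmin: "\<And>v s. s \<in> C \<Longrightarrow> inner (lmo v) v \<le> inner s v"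
    and xC: "x \<in> C" and dp: "0 < \<delta>" and e0: "0 \<le> \<eta>" and e1: "\<eta> \<le> 1"
    and y: "y = bfw_next lmo K \<delta> \<eta> m x"
  shows "y \<in> C \<and> inner m (y - x) \<le> \<eta> * inner m (lmo m - x) \<and> norm (y - x) \<le> \<eta> * norm (lmo m - x)"
proof -
  obtain \<psi> \<Lambda> where st: "boost_loop lmo \<delta> x m K (0, 0) = (\<psi>, \<Lambda>)" by fastforce
  have "binv C x m (lmo m) (0,0)" by (simp add: binv_def)
  from boost_loop_inv[OF cvx lin lmin xC dp this, of K] st
  have I: "binv C x m (lmo m) (\<psi>, \<Lambda>)" by simp
  define s where "s = lmo m"
  have sC: "s \<in> C" using lin s_def by simp
  define d where "d = (if \<Lambda> \<noteq> 0 then scaleR (1 / \<Lambda>) \<psi> else 0)"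
  define \<gamma> where "\<gamma> = (if d \<noteq> 0 then min (\<eta> * norm (s - x) / norm d) 1 else 1)"
  have yeq: "y = (if \<gamma> < 1 then x + scaleR \<gamma> d else x + scaleR \<eta> (s - x))"
    unfolding y bfw_next_def Let_def st fst_conv snd_conv s_def[symmetric] d_def[symmetric] \<gamma>_def[symmetric]
    by (rule refl)
  show ?thesis
  proof (cases "\<gamma> < 1")
    case True
    then have d0: "d \<noteq> 0" using \<gamma>_def by auto
    then have L0: "\<Lambda> \<noteq> 0" using d_def by auto
    with I have Lp: "\<Lambda> > 0" and p0: "\<psi> \<noteq> 0" and dC: "x + d \<in> C"
      and rat: "inner (-m) (s - x) / norm (s - x) \<le> inner (-m) \<psi> / norm \<psi>"
      by (auto simp: binv_def d_def s_def)
    have g: "\<gamma> = \<eta> * norm (s - x) / norm d" using True d0 \<gamma>_def by (auto simp: min_def split: if_splits)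
    have g0: "\<gamma> \<ge> 0" using g e0 by simp
    have yy: "y = x + \<gamma> *\<^sub>R d" using yeq True by simp
    have "(1 - \<gamma>) *\<^sub>R x + \<gamma> *\<^sub>R (x + d) \<in> C"
      using convexD[OF cvx xC dC, of "1 - \<gamma>" \<gamma>] g0 True by simp
    moreover have "(1 - \<gamma>) *\<^sub>R x + \<gamma> *\<^sub>R (x + d) = y" using yy by (simp add: algebra_simps)
    ultimately have yC: "y \<in> C" by simp
    have nd: "norm d = norm \<psi> / \<Lambda>" using Lp d_def by simp
    have ny: "norm (y - x) = \<eta> * norm (s - x)" using yy g g0 d0 e0 by simp
    have "inner m (y - x) = \<gamma> * inner m d" using yy by simp
    also have "\<dots> = \<eta> * norm (s - x) * (inner m \<psi> / norm \<psi>)"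
      using g nd Lp d_def p0 by (simp add: field_simps)
    also have "\<dots> \<le> \<eta> * inner m (s - x)"
    proof (cases "s = x")
      case True then show ?thesis by simp
    next
      case False
      have "inner m \<psi> / norm \<psi> \<le> inner m (s - x) / norm (s - x)" using rat by simp
      then have "norm (s - x) * (inner m \<psi> / norm \<psi>) \<le> inner m (s - x)"
        using False by (simp add: field_simps)
      then show ?thesis using e0 by (metis mult.assoc mult_left_mono)
    qed
    finally show ?thesis using yC ny s_def by simp
  next
    case False
    have yy: "y = x + \<eta> *\<^sub>R (s - x)" using yeq False by simp
    have "(1 - \<eta>) *\<^sub>R x + \<eta> *\<^sub>R s \<in> C"
      using convexD[OF cvx xC sC, of "1 - \<eta>" \<eta>] e0 e1 by simp
    moreover have "(1 - \<eta>) *\<^sub>R x + \<eta> *\<^sub>R s = y" using yy by (simp add: algebra_simps)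
    ultimately show ?thesis using yy e0 s_def by simp
  qed
qed


lemma descent:
  fixes f :: "'a::real_inner \<Rightarrow> real"
  assumes cvx: "convex C" and CU: "C \<subseteq> U"
    and fd: "\<And>y. y \<in> U \<Longrightarrow> (f has_derivative (\<lambda>h. inner (f' y) h)) (at y)"
    and lip: "\<And>y z. y \<in> C \<Longrightarrow> z \<in> C \<Longrightarrow> norm (f' y - f' z) \<le> L * norm (y - z)"
    and xC: "x \<in> C" and yC: "y \<in> C"
  shows "f y \<le> f x + inner (f' x) (y - x) + L / 2 * (norm (y - x))\<^sup>2"
proof -
  define p where "p = (\<lambda>t::real. x + t *\<^sub>R (y - x))"
  define g where "g = (\<lambda>t. f (p t) - t * inner (f' x) (y - x) - L / 2 * t\<^sup>2 * (norm (y - x))\<^sup>2)"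
  have pC: "p t \<in> C" if "0 \<le> t" "t \<le> 1" for t
  proof -
    have "(1 - t) *\<^sub>R x + t *\<^sub>R y \<in> C" using convexD[OF cvx xC yC, of "1 - t" t] that by simp
    moreover have "(1 - t) *\<^sub>R x + t *\<^sub>R y = p t" by (simp add: p_def algebra_simps)
    ultimately show ?thesis by simp
  qed
  have "g 1 \<le> g 0"
  proof (rule DERIV_nonpos_imp_nonincreasing[of 0 1 g])
    fix t :: real assume t: "0 \<le> t" "t \<le> 1"
    have ptU: "p t \<in> U" using pC[OF t] CU by auto
    have pd: "(p has_derivative (\<lambda>h. h *\<^sub>R (y - x))) (at t)"
      unfolding p_def by (auto intro!: derivative_eq_intros)
    have "((f \<circ> p) has_derivative (\<lambda>h. inner (f' (p t)) (h *\<^sub>R (y - x)))) (at t)"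
      using diff_chain_at[OF pd fd[OF ptU]] by (simp add: o_def)
    then have "((f \<circ> p) has_real_derivative inner (f' (p t)) (y - x)) (at t)"
      unfolding has_field_derivative_def by (simp add: mult.commute[of _ "inner _ _"])
    then have D: "(g has_real_derivative (inner (f' (p t)) (y - x) - inner (f' x) (y - x)
         - L / 2 * (2 * t) * (norm (y - x))\<^sup>2)) (at t)"
      unfolding g_def o_def by (auto intro!: derivative_eq_intros)
    have "inner (f' (p t)) (y - x) - inner (f' x) (y - x) = inner (f' (p t) - f' x) (y - x)"
      by (simp add: inner_diff_left)
    also have "\<dots> \<le> norm (f' (p t) - f' x) * norm (y - x)" by (rule norm_cauchy_schwarz)
    also have "\<dots> \<le> L * norm (p t - x) * norm (y - x)"
      by (rule mult_right_mono[OF lip[OF pC[OF t] xC]]) simp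
    also have "\<dots> = L * t * (norm (y - x))\<^sup>2" using t by (simp add: p_def power2_eq_square)
    finally have "inner (f' (p t)) (y - x) - inner (f' x) (y - x)
         - L / 2 * (2 * t) * (norm (y - x))\<^sup>2 \<le> 0" by simp
    with D show "\<exists>D. (g has_real_derivative D) (at t) \<and> D \<le> 0" by blast
  qed simp
  then show ?thesis by (simp add: g_def p_def)
qed

theorem theorem8:
  fixes C :: "'a::euclidean_space set"
    and f :: "'a \<Rightarrow> real" and f' :: "'a \<Rightarrow> 'a" and U :: "'a set"
    and L \<delta> :: real and K T :: nat
    and lmo :: "'a \<Rightarrow> 'a" and minit :: 'a and x :: "nat \<Rightarrow> 'a"
  assumes C_ne: "C \<noteq> {}" and C_compact: "compact C" and C_convex: "convex C"
    and U_open: "open U" and C_U: "C \<subseteq> U"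
    and f_deriv: "\<And>y. y \<in> U \<Longrightarrow> (f has_derivative (\<lambda>h. inner (f' y) h)) (at y)"
    and f'_cont: "continuous_on U f'"
    and f'_lip: "\<And>y z. y \<in> C \<Longrightarrow> z \<in> C \<Longrightarrow> norm (f' y - f' z) \<le> L * norm (y - z)"
    and lmo_in: "\<And>v. lmo v \<in> C"
    and lmo_min: "\<And>v s. s \<in> C \<Longrightarrow> inner (lmo v) v \<le> inner s v"
    and K_pos: "K \<ge> 1" and delta_pos: "0 < \<delta>" and delta_le: "\<delta> \<le> 1"
    and x0: "x 0 = lmo minit"
    and x_step: "\<And>t. t < T \<Longrightarrow>
        x (Suc t) = bfw_next lmo K \<delta> (1 / sqrt (real T + 1)) (f' (x t)) (x t)"
  shows "(MIN t\<in>{0..T}. inner (f' (x t)) (x t - lmo (f' (x t))))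
           \<le> (f (x 0) - (INF y\<in>C. f y) + L * (diameter C)\<^sup>2 / 2) / sqrt (real T + 1)"
proof -
  define \<eta> where "\<eta> = 1 / sqrt (real T + 1)"
  have sp: "sqrt (real T + 1) > 0" by simp
  have e0: "0 < \<eta>" using sp \<eta>_def by simp
  have e1: "\<eta> \<le> 1" unfolding \<eta>_def by simp
  have ee: "(real T + 1) * \<eta>\<^sup>2 = 1" unfolding \<eta>_def by (simp add: power_divide)
  have es: "\<eta> * (real T + 1) = sqrt (real T + 1)" unfolding \<eta>_def
  proof -
    have "sqrt (real T + 1) * sqrt (real T + 1) = real T + 1" by simp
    then show "1 / sqrt (real T + 1) * (real T + 1) = sqrt (real T + 1)" using sp
      by (simp add: field_simps)
  qed
  define D where "D = diameter C"
  define g where "g = (\<lambda>t. inner (f' (x t)) (x t - lmo (f' (x t))))"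
  define nx where "nx = (\<lambda>t. bfw_next lmo K \<delta> \<eta> (f' (x t)) (x t))"
  have bC: "bounded C" using C_compact compact_imp_bounded by blast
  have xC: "x t \<in> C" if "t \<le> T" for t
    using that
  proof (induction t)
    case 0 then show ?case using x0 lmo_in by simp
  next
    case (Suc t)
    then have "x t \<in> C" by simp
    moreover have "x (Suc t) = nx t" using x_step Suc.prems nx_def \<eta>_def by simp
    ultimately show ?case
      using bfw_step[OF C_convex lmo_in lmo_min _ delta_pos _ e1, of "x t"] e0 nx_def by simp
  qed
  have step: "f (nx t) \<le> f (x t) - \<eta> * g t + \<eta>\<^sup>2 * (L * D\<^sup>2 / 2)" if t: "t \<le> T" for t
  proof -
    have xt: "x t \<in> C" using xC t by simp
    from bfw_step[OF C_convex lmo_in lmo_min xt delta_pos _ e1, of "nx t" K "f' (x t)"] e0 nx_def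
    have nC: "nx t \<in> C" and i1: "inner (f' (x t)) (nx t - x t) \<le> \<eta> * inner (f' (x t)) (lmo (f' (x t)) - x t)"
      and n1: "norm (nx t - x t) \<le> \<eta> * norm (lmo (f' (x t)) - x t)" by auto
    have ig: "inner (f' (x t)) (lmo (f' (x t)) - x t) = - g t" unfolding g_def
      by (simp add: inner_diff_right)
    have q: "L / 2 * (norm (nx t - x t))\<^sup>2 \<le> \<eta>\<^sup>2 * (L * D\<^sup>2 / 2)"
    proof (cases "L \<ge> 0")
      case True
      have "norm (lmo (f' (x t)) - x t) \<le> D" unfolding D_def
        using diameter_bounded_bound[OF bC lmo_in xt] by (simp add: dist_norm)
      then have "\<eta> * norm (lmo (f' (x t)) - x t) \<le> \<eta> * D" using e0 by (simp add: mult_left_mono)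
      then have "norm (nx t - x t) \<le> \<eta> * D" using n1 by linarith
      then have "(norm (nx t - x t))\<^sup>2 \<le> (\<eta> * D)\<^sup>2" by (simp add: power_mono)
      then have "L * (norm (nx t - x t))\<^sup>2 \<le> L * ((\<eta> * D)\<^sup>2)" using True by (rule mult_left_mono)
      then show ?thesis by (simp add: power_mult_distrib algebra_simps)
    next
      case False
      have eq: "z = x t" if "z \<in> C" for z
      proof (rule ccontr)
        assume "z \<noteq> x t"
        then have "L * norm (z - x t) < 0" using False by (simp add: mult_neg_pos)
        with f'_lip[OF that xt] norm_ge_zero[of "f' z - f' (x t)"] show False by linarith
      qed
      then have "C = {x t}" using xt by blast
      then have "D = 0" unfolding D_def by simp
      moreover have "nx t = x t" using eq nC by simp
      ultimately show ?thesis by simp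
    qed
    have "f (nx t) \<le> f (x t) + inner (f' (x t)) (nx t - x t) + L / 2 * (norm (nx t - x t))\<^sup>2"
      by (rule descent[OF C_convex C_U f_deriv f'_lip xt nC])
    then show ?thesis using i1 ig q by simp
  qed
  define h where "h = (\<lambda>t. if t \<le> T then f (x t) else f (nx T))"
  have hs: "h (Suc t) = f (nx t)" if "t \<le> T" for t
  proof (cases "Suc t \<le> T")
    case True
    then have "x (Suc t) = nx t" using x_step nx_def \<eta>_def by simp
    then show ?thesis using True h_def by simp
  next
    case False then have "t = T" using that by simp
    then show ?thesis using False h_def by simp
  qed
  have "(\<Sum>t\<le>T. \<eta> * g t) \<le> (\<Sum>t\<le>T. (h t - h (Suc t)) + \<eta>\<^sup>2 * (L * D\<^sup>2 / 2))"
  proof (rule sum_mono)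
    fix t assume "t \<in> {..T}"
    then have "t \<le> T" by simp
    then show "\<eta> * g t \<le> (h t - h (Suc t)) + \<eta>\<^sup>2 * (L * D\<^sup>2 / 2)"
      using step[OF \<open>t \<le> T\<close>] hs[OF \<open>t \<le> T\<close>] \<open>t \<le> T\<close> by (simp add: h_def)
  qed
  also have "\<dots> = h 0 - h (Suc T) + (real T + 1) * \<eta>\<^sup>2 * (L * D\<^sup>2 / 2)"
    by (simp add: sum.distrib sum_telescope)
  also have "\<dots> = f (x 0) - f (nx T) + L * D\<^sup>2 / 2" using ee hs[of T] h_def by simp
  also have "\<dots> \<le> f (x 0) - (INF y\<in>C. f y) + L * D\<^sup>2 / 2"
  proof -
    have "continuous_on C f"
    proof (rule continuous_at_imp_continuous_on, rule ballI)
      fix z assume "z \<in> C"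
      then have "z \<in> U" using C_U by blast
      then show "isCont f z" by (rule has_derivative_continuous[OF f_deriv])
    qed
    then have "compact (f ` C)" by (rule compact_continuous_image[OF _ C_compact])
    then have "bdd_below (f ` C)" by (intro bounded_imp_bdd_below compact_imp_bounded)
    moreover have "nx T \<in> C"
      using bfw_step[OF C_convex lmo_in lmo_min xC[of T] delta_pos _ e1] e0 nx_def by simp
    ultimately have "(INF y\<in>C. f y) \<le> f (nx T)" by (rule cINF_lower)
    then show ?thesis by simp
  qed
  finally have S: "\<eta> * (\<Sum>t\<le>T. g t) \<le> f (x 0) - (INF y\<in>C. f y) + L * D\<^sup>2 / 2"
    by (simp add: sum_distrib_left)
  define M where "M = (MIN t\<in>{0..T}. g t)"
  have "M \<le> g t" if "t \<le> T" for t unfolding M_def using that by simp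
  then have "(\<Sum>t\<le>T. M) \<le> (\<Sum>t\<le>T. g t)" by (intro sum_mono) simp
  then have "(real T + 1) * M \<le> (\<Sum>t\<le>T. g t)" by (simp add: add.commute)
  then have "\<eta> * ((real T + 1) * M) \<le> \<eta> * (\<Sum>t\<le>T. g t)" using e0 by (simp add: mult_left_mono)
  then have "\<eta> * ((real T + 1) * M) \<le> f (x 0) - (INF y\<in>C. f y) + L * D\<^sup>2 / 2"
    using S by linarith
  then have "sqrt (real T + 1) * M \<le> f (x 0) - (INF y\<in>C. f y) + L * D\<^sup>2 / 2"
    using es by (simp add: mult.assoc[symmetric])
  then show ?thesis unfolding M_def g_def D_def using sp by (simp add: field_simps)
qed

end
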